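(* Let $\varphi:[0,\infty)\to(0,\infty)$ be continuous and strictly increasing, let $W(x)=\exp(\varphi(|x|))$, and assume $\lim_{|t|\to\infty}t^k/W(t)=0$ for all $k\in\mathbb N$ and $\int_{-\infty}^\infty\frac{\log W(t)}{1+t^2}dt=\infty$. Let $A_n=\varphi^{-1}(n)$ and $E_n=E_n(\infty,W)$. Then there is a constant $C>0$ such that for all sufficiently large $n$, $$\log E_n\ge -C\left(\int_0^{A_n}\frac{\varphi(x)}{x^2+1}dx+\frac{n}{A_n}\right).$$
   Context: $\|f\|_{\infty,W}=\sup_{x\in\mathbb R}|f(x)/W(x)|$; $\mathcal P_m$ is the space of complex polynomials of degree at most $m$; $E_n(\infty,W)=\inf_{Q\in\mathcal P_{n-1}}\left\|\frac{1}{x-i}-Q(x)\right\|_{\infty,W}$. *)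

theory Defs
  imports "HOL-Analysis.Analysis" "HOL-Computational_Algebra.Polynomial"
begin

definition wnorm :: "(real \<Rightarrow> real) \<Rightarrow> (real \<Rightarrow> complex) \<Rightarrow> real" where
  "wnorm W f = (SUP x\<in>UNIV. cmod (f x) / W x)"

definition E_approx :: "(real \<Rightarrow> real) \<Rightarrow> nat \<Rightarrow> real" where
  "E_approx W n = (INF Q\<in>{Q :: complex poly. degree Q \<le> n - 1}.
      wnorm W (\<lambda>x. 1 / (complex_of_real x - \<i>) - poly Q (complex_of_real x)))"

end

theory Submission
  imports Defs "HOL-Complex_Analysis.Complex_Analysis"
begin

lemma halfplane_max:
  fixes F :: "complex \<Rightarrow> complex"
  assumes hol: "F holomorphic_on {z. Im z > -d}" and d: "d > 0"
    and real_bd: "\<And>t::real. cmod (F (of_real t)) \<le> B"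
    and decay: "\<And>z. Im z \<ge> 0 \<Longrightarrow> cmod z \<ge> 1 \<Longrightarrow> cmod (F z) \<le> K / cmod z"
    and z0: "Im z0 > 0"
  shows "cmod (F z0) \<le> B"
proof (rule ccontr)
  assume "\<not> cmod (F z0) \<le> B"
  hence lt: "B < cmod (F z0)" by simp
  have B0: "B \<ge> 0" using real_bd[of 0] norm_ge_zero[of "F 0"] by (simp del: norm_ge_zero)
  define R where "R = max (cmod z0 + 1) (max 1 (\<bar>K\<bar> / (cmod (F z0) - B) + 1))"
  have R1: "R \<ge> 1" and Rz: "cmod z0 < R" unfolding R_def by auto
  have "\<bar>K\<bar> / (cmod (F z0) - B) < R" unfolding R_def by auto
  hence KR: "\<bar>K\<bar> / R < cmod (F z0) - B" using lt R1
    by (simp add: divide_less_eq mult.commute)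
  define S where "S = {z. cmod z < R \<and> Im z > 0}"
  have openS: "open S" unfolding S_def
    by (intro open_Collect_conj open_Collect_less continuous_intros)
  have clS: "closure S \<subseteq> {z. cmod z \<le> R \<and> Im z \<ge> 0}"
  proof (rule closure_minimal)
    show "S \<subseteq> {z. cmod z \<le> R \<and> Im z \<ge> 0}" unfolding S_def by auto
    show "closed {z. cmod z \<le> R \<and> Im z \<ge> 0}"
      by (intro closed_Collect_conj closed_Collect_le continuous_on_norm_id continuous_on_const continuous_on_Im continuous_on_id)
  qed
  have sub: "{z. cmod z \<le> R \<and> Im z \<ge> 0} \<subseteq> {z. Im z > -d}" using d by auto
  have "cmod (F z0) \<le> max B (K / R)"
  proof (rule maximum_modulus_frontier[of F S])
    have "S \<subseteq> {z. Im z > -d}" unfolding S_def using d by auto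
    thus "F holomorphic_on interior S" unfolding interior_open[OF openS]
      using hol by (rule holomorphic_on_subset[rotated])
    show "continuous_on (closure S) F"
      using holomorphic_on_imp_continuous_on[OF hol] clS sub continuous_on_subset by blast
    show "bounded S" unfolding S_def by (rule bounded_subset[of "cball 0 R"]) auto
    show "z0 \<in> S" using Rz z0 by (simp add: S_def)
  next
    fix z assume "z \<in> frontier S"
    hence zc: "z \<in> closure S" and zn: "z \<notin> S" using interior_open[OF openS]
      by (auto simp: frontier_def)
    hence z1: "cmod z \<le> R" "Im z \<ge> 0" using clS by auto
    show "cmod (F z) \<le> max B (K / R)"
    proof (cases "Im z = 0")
      case True
      hence "z = of_real (Re z)" by (simp add: complex_eq_iff)
      thus ?thesis using real_bd[of "Re z"] by (metis max.coboundedI1)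
    next
      case False
      hence "cmod z = R" using zn z1 by (auto simp: S_def)
      thus ?thesis using decay[of z] z1 R1 by simp
    qed
  qed
  moreover have "K / R < cmod (F z0)" using KR B0
  proof -
    have "K / R \<le> \<bar>K\<bar> / R" using R1 by (intro divide_right_mono) auto
    thus ?thesis using KR B0 by linarith
  qed
  ultimately show False using lt by linarith
qed

lemma poly_sum_n:
  fixes P :: "'a::comm_semiring_1 poly"
  assumes "degree P \<le> n"
  shows "poly P z = (\<Sum>k\<le>n. coeff P k * z ^ k)"
proof -
  have "poly P z = (\<Sum>k\<le>degree P. coeff P k * z ^ k)" by (rule poly_altdef)
  also have "\<dots> = (\<Sum>k\<le>n. coeff P k * z ^ k)"
    by (rule sum.mono_neutral_left) (use assms in \<open>auto simp: coeff_eq_0\<close>)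
  finally show ?thesis .
qed

lemma poly_growth:
  fixes P :: "complex poly"
  assumes deg: "degree P \<le> n" and A: "A > 0"
    and bd: "\<And>x::real. \<bar>x\<bar> \<le> A \<Longrightarrow> cmod (poly P (of_real x)) \<le> M"
    and t: "\<bar>t\<bar> \<ge> A"
  shows "cmod (poly P (of_real t)) \<le> M * (2 * \<bar>t\<bar> / A) ^ n"
proof -
  define H where "H = (\<lambda>u::complex. \<Sum>k\<le>n. coeff P k * (of_real A / 2) ^ k * (1 + u\<^sup>2) ^ k * u ^ (n - k))"
  have Hrep: "H u = u ^ n * poly P (of_real A / 2 * (u + 1 / u))" if "u \<noteq> 0" for u
  proof -
    have "u ^ n * poly P (of_real A / 2 * (u + 1 / u)) = (\<Sum>k\<le>n. u ^ n * (coeff P k * (of_real A / 2 * (u + 1 / u)) ^ k))"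
      by (simp add: poly_sum_n[OF deg] sum_distrib_left)
    also have "\<dots> = H u" unfolding H_def
    proof (rule sum.cong[OF refl])
      fix k assume "k \<in> {..n}"
      hence kn: "k \<le> n" by simp
      have un: "u ^ n = u ^ (n - k) * u ^ k" using kn by (simp add: power_add[symmetric])
      have uk: "(u + 1 / u) ^ k * u ^ k = (1 + u\<^sup>2) ^ k"
        using that by (simp add: power_mult_distrib[symmetric] field_simps power2_eq_square)
      show "u ^ n * (coeff P k * (of_real A / 2 * (u + 1 / u)) ^ k) =
          coeff P k * (of_real A / 2) ^ k * (1 + u\<^sup>2) ^ k * u ^ (n - k)"
      proof -
        have "u ^ n * (coeff P k * (of_real A / 2 * (u + 1 / u)) ^ k) =
          coeff P k * (of_real A / 2) ^ k * ((u + 1 / u) ^ k * u ^ k) * u ^ (n - k)"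
          by (simp only: un power_mult_distrib mult_ac)
        thus ?thesis using \<open>(u + 1 / u) ^ k * u ^ k = (1 + u\<^sup>2) ^ k\<close> by simp
      qed
    qed
    finally show ?thesis by simp
  qed
  have M0: "M \<ge> 0" using bd[of 0] A by (smt (verit) norm_ge_zero)
  have Hbd: "cmod (H u) \<le> M" if "u \<in> cball 0 1" for u
  proof (rule maximum_modulus_frontier[of H "cball 0 1"])
    show "H holomorphic_on interior (cball 0 1)" unfolding H_def by (intro holomorphic_intros)
    show "continuous_on (closure (cball 0 1)) H" unfolding H_def by (intro continuous_intros)
    show "bounded (cball (0::complex) 1)" by simp
    show "u \<in> cball 0 1" by fact
  next
    fix z :: complex assume "z \<in> frontier (cball 0 1)"
    hence z1: "cmod z = 1" by (simp add: frontier_cball)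
    hence z0: "z \<noteq> 0" by auto
    have "cnj z * z = 1" using z1 by (metis complex_norm_square mult.commute of_real_1 power_one)
    hence "1 / z = cnj z" using z0 by (simp add: field_simps)
    hence "of_real A / 2 * (z + 1 / z) = of_real (A * Re z)"
      by (simp add: complex_add_cnj)
    moreover have "\<bar>A * Re z\<bar> \<le> A" using A abs_Re_le_cmod[of z] z1
      by (simp add: abs_mult)
    ultimately have "cmod (poly P (of_real A / 2 * (z + 1 / z))) \<le> M" using bd by metis
    thus "cmod (H z) \<le> M" using Hrep[OF z0] z1 by (simp add: norm_mult norm_power)
  qed
  define s where "s = sqrt (t\<^sup>2 - A\<^sup>2)"
  have At2: "A\<^sup>2 \<le> t\<^sup>2" using t A by (metis abs_le_square_iff abs_of_pos less_imp_le)
  have s0: "s \<ge> 0" and ss: "s\<^sup>2 = t\<^sup>2 - A\<^sup>2" using t A unfolding s_def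
    using At2 by auto
  have st: "s \<le> \<bar>t\<bar>" proof -
    have "s\<^sup>2 \<le> \<bar>t\<bar>\<^sup>2" using ss by simp
    thus ?thesis using s0 by (meson abs_ge_zero power2_le_imp_le)
  qed
  define u0 where "u0 = sgn t * A / (\<bar>t\<bar> + s)"
  have tpos: "\<bar>t\<bar> + s > 0" using t A s0 by linarith
  have tA: "\<bar>t\<bar> + s \<ge> A" using t s0 by linarith
  have sgnt: "sgn t \<noteq> 0" "\<bar>sgn t\<bar> = 1" using t A by (auto simp: sgn_if)
  have u0abs: "\<bar>u0\<bar> = A / (\<bar>t\<bar> + s)" unfolding u0_def using sgnt A tpos by (simp add: abs_mult)
  have u0ne: "u0 \<noteq> 0" using u0abs A tpos by auto
  have u01: "\<bar>u0\<bar> \<le> 1" using u0abs tA tpos by simp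
  have key: "(\<bar>t\<bar> + s)\<^sup>2 + A\<^sup>2 = 2 * \<bar>t\<bar> * (\<bar>t\<bar> + s)" using ss by (simp add: power2_eq_square algebra_simps)
  have "A / 2 * (u0 + 1 / u0) = t"
  proof -
    have "u0 + 1 / u0 = sgn t * (A\<^sup>2 + (\<bar>t\<bar> + s)\<^sup>2) / (A * (\<bar>t\<bar> + s))"
      unfolding u0_def using A tpos sgnt
      by (simp add: field_simps power2_eq_square sgn_if)
    also have "\<dots> = sgn t * (2 * \<bar>t\<bar> * (\<bar>t\<bar> + s)) / (A * (\<bar>t\<bar> + s))"
      using key by (simp add: add.commute)
    also have "\<dots> = sgn t * 2 * \<bar>t\<bar> / A"
    proof -
      have gen: "\<And>y c d::real. y \<noteq> 0 \<Longrightarrow> c * (d * y) / (A * y) = c * d / A" by simp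
      show ?thesis using gen[of "\<bar>t\<bar> + s" "sgn t" "2 * \<bar>t\<bar>"] tpos by (simp add: mult.assoc)
    qed
    finally show ?thesis using A by (simp add: abs_mult_sgn mult.commute field_simps)
  qed
  hence "complex_of_real (A / 2 * (u0 + 1 / u0)) = complex_of_real t" by simp
  hence eq: "of_real A / 2 * (complex_of_real u0 + 1 / complex_of_real u0) = of_real t"
    by simp
  have "cmod (H (of_real u0)) \<le> M" using Hbd u01 by simp
  hence "\<bar>u0\<bar> ^ n * cmod (poly P (of_real t)) \<le> M"
    using Hrep[of "of_real u0"] u0ne eq by (simp add: norm_mult norm_power)
  hence "cmod (poly P (of_real t)) \<le> M / \<bar>u0\<bar> ^ n" using u0ne by (simp add: field_simps mult.commute)
  also have "\<dots> = M * ((\<bar>t\<bar> + s) / A) ^ n" using u0abs by (simp add: power_divide)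
  also have "\<dots> \<le> M * (2 * \<bar>t\<bar> / A) ^ n"
    using M0 st s0 A by (intro mult_left_mono power_mono divide_right_mono) auto
  finally show ?thesis .
qed

definition ker :: "real \<Rightarrow> complex \<Rightarrow> complex" where
  "ker a z = \<i> / (z + complex_of_real a + \<i>)"

lemma Re_ker_gen: "Re (ker a z) = (Im z + 1) / ((Re z + a)\<^sup>2 + (Im z + 1)\<^sup>2)"
  unfolding ker_def by (simp add: Re_divide complex_norm_square[symmetric] cmod_power2)

lemma Re_ker_nonneg: "Im z \<ge> 0 \<Longrightarrow> Re (ker a z) \<ge> 0"
  unfolding Re_ker_gen by (intro divide_nonneg_nonneg) auto

lemma Re_ker_real: "Re (ker a (complex_of_real t)) = 1 / ((t + a)\<^sup>2 + 1)"
  unfolding Re_ker_gen by simp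

lemma Re_ker_i: "Re (ker a \<i>) = 2 / (a\<^sup>2 + 4)"
  unfolding Re_ker_gen by simp

lemma key_ineq:
  fixes A x :: real
  assumes A: "1 \<le> A" and x: "A \<le> x"
  shows "exp (real n) * (2 * x / A) ^ n * (A / sqrt (x\<^sup>2 + A\<^sup>2)) ^ (6 * n) \<le> 1"
proof -
  define b where "b = exp 1 * (2 * x / A) * (A / sqrt (x\<^sup>2 + A\<^sup>2)) ^ 6"
  have eq: "exp (real n) * (2 * x / A) ^ n * (A / sqrt (x\<^sup>2 + A\<^sup>2)) ^ (6 * n) = b ^ n"
  proof -
    have e0: "b ^ n = exp 1 ^ n * (2 * x / A) ^ n * ((A / sqrt (x\<^sup>2 + A\<^sup>2)) ^ 6) ^ n"
      unfolding b_def by (simp only: power_mult_distrib)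
    have e1: "exp 1 ^ n = exp (real n)" using exp_of_nat_mult[of n "1::real"] by simp
    have e2: "((A / sqrt (x\<^sup>2 + A\<^sup>2)) ^ 6) ^ n = (A / sqrt (x\<^sup>2 + A\<^sup>2)) ^ (6 * n)"
      by (rule power_mult[symmetric])
    show ?thesis unfolding e0 e1 e2 ..
  qed
  have s6: "(sqrt (x\<^sup>2 + A\<^sup>2)) ^ 6 = (x\<^sup>2 + A\<^sup>2) ^ 3"
  proof -
    have "(sqrt (x\<^sup>2 + A\<^sup>2)) ^ 6 = ((sqrt (x\<^sup>2 + A\<^sup>2))\<^sup>2) ^ 3"
      by (simp only: power_mult[symmetric]) simp
    moreover have "(sqrt (x\<^sup>2 + A\<^sup>2))\<^sup>2 = x\<^sup>2 + A\<^sup>2" by (intro real_sqrt_pow2) (simp add: add_nonneg_nonneg)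
    ultimately show ?thesis by simp
  qed
  have pos: "x\<^sup>2 + A\<^sup>2 > 0" using A by (intro add_nonneg_pos) auto
  have bq: "b = exp 1 * 2 * x * A ^ 5 / (x\<^sup>2 + A\<^sup>2) ^ 3"
  proof -
    have "b = exp 1 * (2 * x / A) * (A ^ 6 / (x\<^sup>2 + A\<^sup>2) ^ 3)" unfolding b_def power_divide s6 ..
    also have "A ^ 6 = A * A ^ 5" by (simp add: power_Suc[symmetric])
    finally show ?thesis using A by simp
  qed
  have am: "x\<^sup>2 + A\<^sup>2 \<ge> 2 * x * A" using sum_squares_ge_zero[of "x - A" 0]
    by (simp add: power2_eq_square algebra_simps)
  have "(2 * x * A) ^ 3 \<le> (x\<^sup>2 + A\<^sup>2) ^ 3" using am A x by (intro power_mono) auto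
  moreover have "exp 1 * 2 * x * A ^ 5 \<le> (2 * x * A) ^ 3"
  proof -
    have A2: "A ^ 2 \<le> x ^ 2" using A x by (intro power_mono) auto
    have A5: "A ^ 5 = A ^ 3 * A ^ 2" by (simp flip: power_add)
    have "A ^ 5 \<le> A ^ 3 * x ^ 2" unfolding A5 using A2 A by (intro mult_left_mono) auto
    hence "exp 1 * A ^ 5 \<le> 3 * (A ^ 3 * x ^ 2)" using exp_le A
      by (intro mult_mono) auto
    hence "(2 * x) * (exp 1 * A ^ 5) \<le> (2 * x) * (3 * (A ^ 3 * x ^ 2))" using A x
      by (intro mult_left_mono) auto
    also have "\<dots> \<le> (2 * x) * (4 * (A ^ 3 * x ^ 2))" using A x
      by (intro mult_left_mono) auto
    also have "\<dots> = (2 * x * A) ^ 3" by (simp add: power_mult_distrib power2_eq_square power3_eq_cube)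
    finally show ?thesis by (simp add: mult_ac)
  qed
  ultimately have num: "exp 1 * 2 * x * A ^ 5 \<le> (x\<^sup>2 + A\<^sup>2) ^ 3" by linarith
  have p3: "(x\<^sup>2 + A\<^sup>2) ^ 3 > 0" using pos by (rule zero_less_power)
  have b1: "b \<le> 1" unfolding bq using num p3 by (simp only: divide_le_eq_1_pos)
  have b0: "b \<ge> 0" unfolding b_def using A x by (intro mult_nonneg_nonneg divide_nonneg_nonneg zero_le_power) auto
  show ?thesis by (subst eq) (rule power_le_one[OF b0 b1])
qed

lemma half_le_aux: "(y::real) \<le> 1 \<Longrightarrow> 0 \<le> y \<Longrightarrow> 1 / 2 \<le> 1 / (y + 1)"
  by (simp add: field_simps)

lemma core:
  fixes P :: "complex poly" and \<phi> :: "real \<Rightarrow> real" and A w :: real and n :: nat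
  assumes deg: "degree P \<le> n" and Pi: "poly P \<i> = -1" and A: "A \<ge> 1"
    and phimono: "\<And>x y. 0 \<le> x \<Longrightarrow> x \<le> y \<Longrightarrow> \<phi> x \<le> \<phi> y"
    and phipos: "\<And>x. 0 \<le> x \<Longrightarrow> \<phi> x > 0"
    and phiA: "\<phi> A = real n"
    and Pbd: "\<And>t::real. \<bar>t\<bar> \<le> A \<Longrightarrow> cmod (poly P (of_real t)) \<le> cmod (of_real t - \<i>) * w * exp (\<phi> \<bar>t\<bar>)"
  shows "(A / (1 + A)) ^ (6 * n) * exp (- (\<Sum>m\<le>nat \<lfloor>A\<rfloor> + 1. 8 * \<phi> (min (real m) A) / ((real m)\<^sup>2 + 4))) / 2 \<le> w"
proof -
  define J where "J = nat \<lfloor>A\<rfloor> + 1"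
  define c where "c = (\<lambda>m::nat. 2 * \<phi> (min (real m) A))"
  have c0: "c m \<ge> 0" for m unfolding c_def using phipos[of "min (real m) A"] A by auto
  define Phi where "Phi = (\<lambda>z. \<Sum>m\<le>J. complex_of_real (c m) *
      (ker (- real m) z + ker (real m) z))"
  have RePhi: "Re (Phi z) = (\<Sum>m\<le>J. c m * (Re (ker (- real m) z) + Re (ker (real m) z)))" for z
    unfolding Phi_def by (simp add: Re_sum)
  have RePhi_nonneg: "Re (Phi z) \<ge> 0" if "Im z \<ge> 0" for z
    unfolding RePhi using that c0 Re_ker_nonneg by (intro sum_nonneg mult_nonneg_nonneg add_nonneg_nonneg) auto
  have RePhi_i: "Re (Phi \<i>) = (\<Sum>m\<le>J. 8 * \<phi> (min (real m) A) / ((real m)\<^sup>2 + 4))"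
    unfolding RePhi Re_ker_i c_def by (intro sum.cong refl) (simp add: field_simps)
  have RePhi_real: "Re (Phi (of_real t)) \<ge> \<phi> \<bar>t\<bar>" if t: "\<bar>t\<bar> \<le> A" for t
  proof -
    define m where "m = nat \<lceil>\<bar>t\<bar>\<rceil>"
    have mt: "\<bar>t\<bar> \<le> real m" "real m < \<bar>t\<bar> + 1" unfolding m_def by linarith+
    have mJ: "m \<in> {..J}" unfolding J_def m_def using t by (auto simp: nat_le_iff) linarith
    have term_nonneg: "c k * (Re (ker (- real k) (of_real t)) + Re (ker (real k) (of_real t))) \<ge> 0" for k
      using c0 Re_ker_nonneg[of "of_real t"] by (intro mult_nonneg_nonneg add_nonneg_nonneg) auto
    have "c m * (Re (ker (- real m) (of_real t)) + Re (ker (real m) (of_real t))) \<le> Re (Phi (of_real t))"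
      unfolding RePhi using mJ term_nonneg by (intro member_le_sum) auto
    moreover have "\<phi> \<bar>t\<bar> \<le> c m * (Re (ker (- real m) (of_real t)) + Re (ker (real m) (of_real t)))"
    proof -
      have k1: "1 / ((t + - real m)\<^sup>2 + 1) \<ge> 0" "1 / ((t + real m)\<^sup>2 + 1) \<ge> 0" by auto
      have "1 / ((t + - real m)\<^sup>2 + 1) + 1 / ((t + real m)\<^sup>2 + 1) \<ge> 1 / 2"
      proof (cases "t \<ge> 0")
        case True
        hence "\<bar>t + - real m\<bar> \<le> 1" using mt by linarith
        hence "(t + - real m)\<^sup>2 \<le> 1" by (simp only: abs_square_le_1)
        hence "1 / ((t + - real m)\<^sup>2 + 1) \<ge> 1 / 2" by (intro half_le_aux) auto
        thus ?thesis using k1 by linarith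
      next
        case False
        hence "\<bar>t + real m\<bar> \<le> 1" using mt by linarith
        hence "(t + real m)\<^sup>2 \<le> 1" by (simp only: abs_square_le_1)
        hence "1 / ((t + real m)\<^sup>2 + 1) \<ge> 1 / 2" by (intro half_le_aux) auto
        thus ?thesis using k1 by linarith
      qed
      hence "c m * (1 / 2) \<le> c m * (1 / ((t + - real m)\<^sup>2 + 1) + 1 / ((t + real m)\<^sup>2 + 1))"
        using c0 by (intro mult_left_mono) auto
      moreover have "\<phi> \<bar>t\<bar> \<le> c m * (1 / 2)" unfolding c_def
        using phimono[of "\<bar>t\<bar>" "min (real m) A"] mt t by auto
      ultimately show ?thesis using Re_ker_real by (metis order_trans)
    qed
    ultimately show ?thesis by linarith
  qed
  have w0: "w \<ge> 0"
  proof -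
    have "cmod (poly P (of_real 0)) \<le> cmod (of_real 0 - \<i>) * w * exp (\<phi> \<bar>0\<bar>)" using Pbd[of 0] A by simp
    hence "0 \<le> cmod (of_real 0 - \<i>) * w * exp (\<phi> \<bar>0\<bar>)"
      by (meson norm_ge_zero order_trans)
    thus ?thesis by (simp add: zero_le_mult_iff)
  qed
  define g where "g = (\<lambda>z. (\<i> * complex_of_real A / (z + \<i> * complex_of_real A)) ^ (6 * n))"
  define F where "F = (\<lambda>z. poly P z * g z * exp (- Phi z) / (z + \<i>))"
  have normF: "cmod (F z) = cmod (poly P z) * cmod (g z) * exp (- Re (Phi z)) / cmod (z + \<i>)" for z
    unfolding F_def by (simp add: norm_mult norm_divide)
  have hol: "F holomorphic_on {z. Im z > - (1/2)}"
  proof -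
    have ne1: "z + \<i> * complex_of_real A \<noteq> 0" if "Im z > -(1/2)" for z
      using that A by (auto simp: complex_eq_iff)
    have ne2: "z + complex_of_real a + \<i> \<noteq> 0" if "Im z > -(1/2)" for z a
      using that by (auto simp: complex_eq_iff)
    have ne3: "z + \<i> \<noteq> 0" if "Im z > -(1/2)" for z
      using that by (auto simp: complex_eq_iff)
    show ?thesis unfolding F_def g_def Phi_def ker_def
      by (intro holomorphic_intros) (use ne1 ne2 ne3 in auto)
  qed
  have normg: "cmod (g z) = (A / cmod (z + \<i> * complex_of_real A)) ^ (6 * n)" for z
    unfolding g_def using A by (simp add: norm_power norm_divide norm_mult)
  have cm1: "cmod (complex_of_real t + \<i>) = sqrt (t\<^sup>2 + 1)" for t
    by (simp add: cmod_def)
  have cm2: "cmod (complex_of_real t - \<i>) = sqrt (t\<^sup>2 + 1)" for t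
    by (simp add: cmod_def)
  have cm3: "cmod (complex_of_real t + \<i> * complex_of_real A) = sqrt (t\<^sup>2 + A\<^sup>2)" for t
    by (simp add: cmod_def)
  have realbd: "cmod (F (of_real t)) \<le> w" for t
  proof -
    have qpos: "sqrt (t\<^sup>2 + 1) > 0" by (simp add: add_nonneg_pos)
    have gnn: "0 \<le> (A / sqrt (t\<^sup>2 + A\<^sup>2)) ^ (6 * n)" using A by (intro zero_le_power divide_nonneg_nonneg) auto
    have nF: "cmod (F (of_real t)) = cmod (poly P (of_real t)) * (A / sqrt (t\<^sup>2 + A\<^sup>2)) ^ (6 * n)
        * exp (- Re (Phi (of_real t))) / sqrt (t\<^sup>2 + 1)"
      unfolding normF normg cm1 cm3 ..
    show ?thesis
    proof (cases "\<bar>t\<bar> \<le> A")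
      case True
      have P1: "cmod (poly P (of_real t)) \<le> sqrt (t\<^sup>2 + 1) * w * exp (\<phi> \<bar>t\<bar>)"
        using Pbd[OF True] unfolding cm2 .
      have g1: "(A / sqrt (t\<^sup>2 + A\<^sup>2)) ^ (6 * n) \<le> 1"
      proof (rule power_le_one)
        show "0 \<le> A / sqrt (t\<^sup>2 + A\<^sup>2)" using A by simp
        have "A \<le> sqrt (t\<^sup>2 + A\<^sup>2)" using A by (intro real_le_rsqrt) simp
        moreover have "sqrt (t\<^sup>2 + A\<^sup>2) > 0" using A by (intro real_sqrt_gt_zero add_nonneg_pos) auto
        ultimately show "A / sqrt (t\<^sup>2 + A\<^sup>2) \<le> 1" by (simp add: divide_le_eq_1_pos)
      qed
      have e1: "exp (- Re (Phi (of_real t))) \<le> exp (- \<phi> \<bar>t\<bar>)" using RePhi_real[OF True] by simp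
      have "cmod (poly P (of_real t)) * (A / sqrt (t\<^sup>2 + A\<^sup>2)) ^ (6 * n) * exp (- Re (Phi (of_real t)))
          \<le> (sqrt (t\<^sup>2 + 1) * w * exp (\<phi> \<bar>t\<bar>)) * 1 * exp (- \<phi> \<bar>t\<bar>)"
        using P1 g1 e1 gnn w0 by (intro mult_mono) auto
      also have "\<dots> = sqrt (t\<^sup>2 + 1) * w" by (simp add: exp_minus field_simps)
      finally show ?thesis unfolding nF using qpos by (simp add: divide_le_eq mult.commute)
    next
      case False
      define M where "M = sqrt (1 + A\<^sup>2) * w * exp (real n)"
      have bdM: "cmod (poly P (of_real x)) \<le> M" if x: "\<bar>x\<bar> \<le> A" for x
      proof -
        have "x\<^sup>2 \<le> A\<^sup>2" using x A by (metis abs_le_square_iff abs_of_nonneg order_trans zero_le_one)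
        hence s1: "sqrt (x\<^sup>2 + 1) \<le> sqrt (1 + A\<^sup>2)" by simp
        have s2: "exp (\<phi> \<bar>x\<bar>) \<le> exp (real n)" using phimono[of "\<bar>x\<bar>" A] x phiA by simp
        have "cmod (poly P (of_real x)) \<le> sqrt (x\<^sup>2 + 1) * w * exp (\<phi> \<bar>x\<bar>)"
          using Pbd[OF x] unfolding cm2 .
        also have "\<dots> \<le> M" unfolding M_def using s1 s2 w0 by (intro mult_mono) auto
        finally show ?thesis .
      qed
      have tA: "A \<le> \<bar>t\<bar>" using False by simp
      have P2: "cmod (poly P (of_real t)) \<le> M * (2 * \<bar>t\<bar> / A) ^ n"
        using poly_growth[OF deg _ bdM tA] A by simp
      have e1: "exp (- Re (Phi (of_real t))) \<le> 1" using RePhi_nonneg[of "of_real t"] by simp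
      have M0: "M \<ge> 0" unfolding M_def using w0 by simp
      have "cmod (poly P (of_real t)) * (A / sqrt (t\<^sup>2 + A\<^sup>2)) ^ (6 * n) * exp (- Re (Phi (of_real t)))
          \<le> (M * (2 * \<bar>t\<bar> / A) ^ n) * (A / sqrt (t\<^sup>2 + A\<^sup>2)) ^ (6 * n) * 1"
      proof -
        have p2: "0 \<le> (2 * \<bar>t\<bar> / A) ^ n" using A by simp
        have "0 \<le> M * (2 * \<bar>t\<bar> / A) ^ n" using M0 p2 by simp
        thus ?thesis using P2 e1 gnn M0 by (intro mult_mono) auto
      qed
      also have "\<dots> = sqrt (1 + A\<^sup>2) * w * (exp (real n) * (2 * \<bar>t\<bar> / A) ^ n * (A / sqrt (\<bar>t\<bar>\<^sup>2 + A\<^sup>2)) ^ (6 * n))"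
        unfolding M_def by simp
      also have "\<dots> \<le> sqrt (1 + A\<^sup>2) * w * 1"
        using key_ineq[OF A tA, of n] w0 by (intro mult_left_mono) auto
      also have "\<dots> \<le> sqrt (t\<^sup>2 + 1) * w"
      proof -
        have "A\<^sup>2 \<le> t\<^sup>2" using tA A by (metis abs_le_square_iff abs_of_nonneg order_trans zero_le_one)
        hence "sqrt (1 + A\<^sup>2) \<le> sqrt (t\<^sup>2 + 1)" by simp
        thus ?thesis using w0 by (simp add: mult_right_mono)
      qed
      finally show ?thesis unfolding nF using qpos by (simp add: divide_le_eq mult.commute)
    qed
  qed
  define S where "S = (\<Sum>k\<le>n. cmod (coeff P k))"
  have decay: "cmod (F z) \<le> (S * A ^ (6 * n)) / cmod z" if z: "Im z \<ge> 0" "cmod z \<ge> 1" for z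
  proof -
    have zpos: "cmod z > 0" using z by linarith
    have Pz: "cmod (poly P z) \<le> S * cmod z ^ n"
    proof -
      have "cmod (poly P z) \<le> (\<Sum>k\<le>n. cmod (coeff P k * z ^ k))"
        unfolding poly_sum_n[OF deg] by (rule norm_sum)
      also have "\<dots> \<le> (\<Sum>k\<le>n. cmod (coeff P k) * cmod z ^ n)"
      proof (rule sum_mono)
        fix k assume "k \<in> {..n}"
        hence "cmod z ^ k \<le> cmod z ^ n" using z by (intro power_increasing) auto
        thus "cmod (coeff P k * z ^ k) \<le> cmod (coeff P k) * cmod z ^ n"
          by (simp add: norm_mult norm_power mult_left_mono)
      qed
      also have "\<dots> = S * cmod z ^ n" unfolding S_def by (simp add: sum_distrib_right)
      finally show ?thesis .
    qed
    have sq: "cmod z \<le> cmod (z + complex_of_real b * \<i>)" if "b \<ge> 0" for b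
    proof -
      have "(cmod z)\<^sup>2 \<le> (cmod (z + complex_of_real b * \<i>))\<^sup>2"
      proof -
        have "(Im z)\<^sup>2 \<le> (Im z + b)\<^sup>2" using z that by (intro power_mono) auto
        moreover have "Re (z + complex_of_real b * \<i>) = Re z" "Im (z + complex_of_real b * \<i>) = Im z + b" by simp_all
        ultimately show ?thesis unfolding cmod_power2 by simp
      qed
      thus ?thesis by (rule power2_le_imp_le) simp
    qed
    have z1: "cmod z \<le> cmod (z + \<i>)" using sq[of 1] by simp
    have zA: "cmod z \<le> cmod (z + \<i> * complex_of_real A)" using sq[of A] A by (simp add: mult.commute)
    have gz: "cmod (g z) \<le> (A / cmod z) ^ (6 * n)" unfolding normg
    proof (rule power_mono)
      have "0 < cmod (z + \<i> * complex_of_real A) * cmod z" using zA zpos by (intro mult_pos_pos) auto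
      thus "A / cmod (z + \<i> * complex_of_real A) \<le> A / cmod z" using zA zpos A
        by (intro divide_left_mono) auto
      show "0 \<le> A / cmod (z + \<i> * complex_of_real A)" using A by simp
    qed
    have ez: "exp (- Re (Phi z)) \<le> 1" using RePhi_nonneg[OF z(1)] by simp
    have S0: "S \<ge> 0" unfolding S_def by (intro sum_nonneg) auto
    have "cmod (F z) \<le> (S * cmod z ^ n) * (A / cmod z) ^ (6 * n) * 1 / cmod z"
    proof -
      have "cmod (poly P z) * cmod (g z) * exp (- Re (Phi z)) \<le> (S * cmod z ^ n) * (A / cmod z) ^ (6 * n) * 1"
      proof -
        have "0 \<le> S * cmod z ^ n * (A / cmod z) ^ (6 * n)" using S0 A by simp
        thus ?thesis using Pz gz ez S0 by (intro mult_mono) auto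
      qed
      moreover have "cmod (poly P z) * cmod (g z) * exp (- Re (Phi z)) / cmod (z + \<i>)
          \<le> cmod (poly P z) * cmod (g z) * exp (- Re (Phi z)) / cmod z"
      proof -
        have "0 < cmod (z + \<i>) * cmod z" using z1 zpos by (intro mult_pos_pos) auto
        thus ?thesis using z1 zpos by (intro divide_left_mono) auto
      qed
      ultimately show ?thesis unfolding normF using zpos by (meson divide_right_mono order_trans less_imp_le)
    qed
    also have "\<dots> = S * A ^ (6 * n) * (cmod z ^ n / cmod z ^ (6 * n)) / cmod z"
      by (simp add: power_divide)
    also have "\<dots> \<le> S * A ^ (6 * n) * 1 / cmod z"
    proof -
      have "cmod z ^ n \<le> cmod z ^ (6 * n)" using z by (intro power_increasing) auto
      hence "cmod z ^ n / cmod z ^ (6 * n) \<le> 1" using zpos by (simp add: divide_le_eq_1_pos)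
      thus ?thesis using S0 A zpos by (intro divide_right_mono mult_left_mono) auto
    qed
    finally show ?thesis by simp
  qed
  have Fi: "cmod (F \<i>) = (A / (1 + A)) ^ (6 * n) * exp (- Re (Phi \<i>)) / 2"
  proof -
    have "cmod (\<i> + \<i> * complex_of_real A) = 1 + A"
    proof -
      have "\<i> + \<i> * complex_of_real A = \<i> * complex_of_real (1 + A)" by (simp add: algebra_simps)
      moreover have "cmod (complex_of_real (1 + A)) = 1 + A" using A by (subst norm_of_real) simp
      ultimately show ?thesis by (simp only: norm_mult norm_ii) simp
    qed
    moreover have "cmod (\<i> + \<i>) = 2" by (simp add: cmod_def)
    ultimately show ?thesis unfolding normF normg Pi by simp
  qed
  have "cmod (F \<i>) \<le> w"
    by (rule halfplane_max[OF _ _ realbd decay, of "1/2"]) (use hol in auto)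
  thus ?thesis unfolding Fi RePhi_i J_def by simp
qed

lemma sum_int_bound:
  fixes \<phi> :: "real \<Rightarrow> real"
  assumes cont: "continuous_on {0..} \<phi>"
    and phimono: "\<And>x y. 0 \<le> x \<Longrightarrow> x \<le> y \<Longrightarrow> \<phi> x \<le> \<phi> y"
    and phipos: "\<And>x. 0 \<le> x \<Longrightarrow> \<phi> x > 0"
  shows "(\<Sum>m<J. \<phi> (real m) / ((real m + 1)\<^sup>2 + 1)) \<le> integral {0..real J} (\<lambda>x. \<phi> x / (x\<^sup>2 + 1))"
proof (induction J)
  case 0
  then show ?case by simp
next
  case (Suc J)
  let ?f = "\<lambda>x. \<phi> x / (x\<^sup>2 + 1)"
  have intg: "?f integrable_on {a..b}" if "0 \<le> a" for a b
  proof (rule integrable_continuous_interval)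
    have "continuous_on {a..b} \<phi>" using that by (intro continuous_on_subset[OF cont]) auto
    moreover have "\<And>x::real. x\<^sup>2 + 1 \<noteq> 0" by (metis add_nonneg_pos zero_le_power2 zero_less_one less_irrefl)
    ultimately show "continuous_on {a..b} ?f" by (intro continuous_intros) auto
  qed
  have comb: "integral {0..real J} ?f + integral {real J..real (Suc J)} ?f = integral {0..real (Suc J)} ?f"
    by (rule Henstock_Kurzweil_Integration.integral_combine) (auto intro: intg)
  have "integral {real J..real (Suc J)} (\<lambda>x. \<phi> (real J) / ((real J + 1)\<^sup>2 + 1)) \<le> integral {real J..real (Suc J)} ?f"
  proof (rule integral_le)
    show "(\<lambda>x. \<phi> (real J) / ((real J + 1)\<^sup>2 + 1)) integrable_on {real J..real (Suc J)}" by (rule integrable_const_ivl)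
    show "?f integrable_on {real J..real (Suc J)}" by (rule intg) simp
    fix x assume x: "x \<in> {real J..real (Suc J)}"
    have a: "\<phi> (real J) \<le> \<phi> x" using x phimono by auto
    have b: "x\<^sup>2 + 1 \<le> (real J + 1)\<^sup>2 + 1" using x by (auto intro!: power_mono)
    have c: "0 < \<phi> (real J)" using phipos by simp
    have "\<phi> (real J) / ((real J + 1)\<^sup>2 + 1) \<le> \<phi> (real J) / (x\<^sup>2 + 1)"
      using b c by (intro divide_left_mono) (auto intro!: mult_pos_pos add_nonneg_pos)
    also have "\<dots> \<le> \<phi> x / (x\<^sup>2 + 1)" using a by (intro divide_right_mono) auto
    finally show "\<phi> (real J) / ((real J + 1)\<^sup>2 + 1) \<le> ?f x" .
  qed
  hence "\<phi> (real J) / ((real J + 1)\<^sup>2 + 1) \<le> integral {real J..real (Suc J)} ?f" by simp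
  thus ?case using Suc.IH comb by simp
qed

lemma phi_sum_bound:
  fixes \<phi> :: "real \<Rightarrow> real" and A :: real and n :: nat
  assumes cont: "continuous_on {0..} \<phi>"
    and phimono: "\<And>x y. 0 \<le> x \<Longrightarrow> x \<le> y \<Longrightarrow> \<phi> x \<le> \<phi> y"
    and phipos: "\<And>x. 0 \<le> x \<Longrightarrow> \<phi> x > 0"
    and A: "A \<ge> 1" and phiA: "\<phi> A = real n"
  shows "(\<Sum>m\<le>nat \<lfloor>A\<rfloor> + 1. 8 * \<phi> (min (real m) A) / ((real m)\<^sup>2 + 4))
      \<le> 16 * integral {0..A} (\<lambda>x. \<phi> x / (x\<^sup>2 + 1)) + 16 * real n / A"
proof -
  define J where "J = nat \<lfloor>A\<rfloor>"
  define g where "g = (\<lambda>m::nat. 8 * \<phi> (min (real m) A) / ((real m)\<^sup>2 + 4))"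
  let ?f = "\<lambda>x. \<phi> x / (x\<^sup>2 + 1)"
  have JA: "real J \<le> A" "A < real J + 1" unfolding J_def using A by linarith+
  have split: "(\<Sum>m\<le>J + 1. g m) = (\<Sum>m<J. g m) + g J + g (J + 1)"
  proof -
    have "{..J + 1} = {..<Suc (Suc J)}" by auto
    thus ?thesis by simp
  qed
  have head: "g m \<le> 16 * (\<phi> (real m) / ((real m + 1)\<^sup>2 + 1))" if "m < J" for m
  proof -
    have "real m \<le> A" using that JA by linarith
    hence mn: "min (real m) A = real m" by simp
    have p: "\<phi> (real m) > 0" using phipos by simp
    have "8 * ((real m + 1)\<^sup>2 + 1) \<le> 16 * ((real m)\<^sup>2 + 4)"
      using sum_squares_ge_zero[of "real m - 1" 0] by (simp add: power2_eq_square algebra_simps)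
    hence "8 / ((real m)\<^sup>2 + 4) \<le> 16 / ((real m + 1)\<^sup>2 + 1)"
    proof -
      have apos: "(real m)\<^sup>2 + 4 > 0" by (intro add_nonneg_pos) auto
      have bpos: "(real m + 1)\<^sup>2 + 1 > 0" by (intro add_nonneg_pos) auto
      show ?thesis using apos bpos \<open>8 * ((real m + 1)\<^sup>2 + 1) \<le> 16 * ((real m)\<^sup>2 + 4)\<close>
        by (simp add: frac_le_eq divide_le_eq le_divide_eq mult.commute)
    qed
    hence "8 / ((real m)\<^sup>2 + 4) * \<phi> (real m) \<le> 16 / ((real m + 1)\<^sup>2 + 1) * \<phi> (real m)"
      using p by (intro mult_right_mono) auto
    thus ?thesis unfolding g_def mn by simp
  qed
  have tail: "g m \<le> 8 * real n / A" if "m \<ge> J" for m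
  proof -
    have m1: "real m \<ge> A - 1" using that JA by linarith
    have "(A - 1)\<^sup>2 \<le> (real m)\<^sup>2" using m1 A by (intro power_mono) auto
    moreover have "A \<le> (A - 1)\<^sup>2 + 4"
      using sum_squares_ge_zero[of "A - 3/2" 0] by (simp add: power2_eq_square algebra_simps)
    ultimately have den: "A \<le> (real m)\<^sup>2 + 4" by linarith
    have num: "\<phi> (min (real m) A) \<le> real n" using phimono[of "min (real m) A" A] A phiA by auto
    have "8 * \<phi> (min (real m) A) / ((real m)\<^sup>2 + 4) \<le> 8 * real n / ((real m)\<^sup>2 + 4)"
      using num by (intro divide_right_mono) auto
    also have "\<dots> \<le> 8 * real n / A" using den A by (intro divide_left_mono) auto
    finally show ?thesis unfolding g_def .
  qed
  have "(\<Sum>m<J. g m) \<le> (\<Sum>m<J. 16 * (\<phi> (real m) / ((real m + 1)\<^sup>2 + 1)))"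
    using head by (intro sum_mono) auto
  also have "\<dots> = 16 * (\<Sum>m<J. \<phi> (real m) / ((real m + 1)\<^sup>2 + 1))" by (simp add: sum_distrib_left)
  also have "\<dots> \<le> 16 * integral {0..real J} ?f"
    using sum_int_bound[OF cont phimono phipos, of J] by simp
  also have "\<dots> \<le> 16 * integral {0..A} ?f"
  proof -
    have intg: "?f integrable_on {a..b}" if "0 \<le> a" for a b
    proof (rule integrable_continuous_interval)
      have "continuous_on {a..b} \<phi>" using that by (intro continuous_on_subset[OF cont]) auto
      moreover have "\<And>x::real. x\<^sup>2 + 1 \<noteq> 0" by (metis add_nonneg_pos zero_le_power2 zero_less_one less_irrefl)
      ultimately show "continuous_on {a..b} ?f" by (intro continuous_intros) auto
    qed
    have "integral {0..real J} ?f \<le> integral {0..A} ?f"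
    proof (rule integral_subset_le)
      show "{0..real J} \<subseteq> {0..A}" using JA by auto
      show "?f integrable_on {0..real J}" "?f integrable_on {0..A}" by (auto intro: intg)
      show "\<forall>x\<in>{0..A}. 0 \<le> ?f x"
      proof
        fix x assume "x \<in> {0..A}"
        hence "\<phi> x \<ge> 0" using phipos[of x] by simp
        thus "0 \<le> ?f x" by (intro divide_nonneg_nonneg) auto
      qed
    qed
    thus ?thesis by simp
  qed
  finally have h: "(\<Sum>m<J. g m) \<le> 16 * integral {0..A} ?f" .
  have "(\<Sum>m\<le>J + 1. g m) \<le> 16 * integral {0..A} ?f + 8 * real n / A + 8 * real n / A"
    unfolding split using h tail[of J] tail[of "J+1"] by simp
  thus ?thesis unfolding g_def J_def by simp
qed

lemma int_mono_A:
  fixes \<phi> :: "real \<Rightarrow> real"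
  assumes cont: "continuous_on {0..} \<phi>"
    and phipos: "\<And>x. 0 \<le> x \<Longrightarrow> \<phi> x > 0"
    and b: "0 \<le> b" "b \<le> A"
  shows "integral {0..b} (\<lambda>x. \<phi> x / (x\<^sup>2 + 1)) \<le> integral {0..A} (\<lambda>x. \<phi> x / (x\<^sup>2 + 1))"
proof -
  let ?f = "\<lambda>x. \<phi> x / (x\<^sup>2 + 1)"
  have intg: "?f integrable_on {a..c}" if "0 \<le> a" for a c
  proof (rule integrable_continuous_interval)
    have "continuous_on {a..c} \<phi>" using that by (intro continuous_on_subset[OF cont]) auto
    moreover have "\<And>x::real. x\<^sup>2 + 1 \<noteq> 0" by (metis add_nonneg_pos zero_le_power2 zero_less_one less_irrefl)
    ultimately show "continuous_on {a..c} ?f" by (intro continuous_intros) auto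
  qed
  show ?thesis
  proof (rule integral_subset_le)
    show "{0..b} \<subseteq> {0..A}" using b by auto
    show "?f integrable_on {0..b}" "?f integrable_on {0..A}" by (auto intro: intg)
    show "\<forall>x\<in>{0..A}. 0 \<le> ?f x"
    proof
      fix x assume "x \<in> {0..A}"
      hence "\<phi> x \<ge> 0" using phipos[of x] by simp
      thus "0 \<le> ?f x" by (intro divide_nonneg_nonneg) auto
    qed
  qed
qed

lemma wnorm_bdd:
  fixes \<phi> :: "real \<Rightarrow> real" and Q :: "complex poly"
  assumes pos: "\<And>x. x \<ge> 0 \<Longrightarrow> \<phi> x > 0"
    and growth: "\<And>k::nat. ((\<lambda>t. t ^ k / exp (\<phi> \<bar>t\<bar>)) \<longlongrightarrow> 0) at_infinity"
  shows "bdd_above ((\<lambda>x. cmod (1 / (complex_of_real x - \<i>) - poly Q (complex_of_real x)) / exp (\<phi> \<bar>x\<bar>)) ` UNIV)"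
proof -
  define d where "d = degree Q"
  define S where "S = (\<Sum>k\<le>d. cmod (coeff Q k))"
  have S0: "S \<ge> 0" unfolding S_def by (intro sum_nonneg) auto
  have "\<forall>\<^sub>F t in at_infinity. (\<lambda>t. t ^ d / exp (\<phi> \<bar>t\<bar>)) t < 1"
    by (rule order_tendstoD(2)[OF growth[of d]]) simp
  then obtain R where R: "\<And>t::real. norm t \<ge> R \<Longrightarrow> t ^ d / exp (\<phi> \<bar>t\<bar>) < 1"
    unfolding eventually_at_infinity by blast
  have W1: "exp (\<phi> \<bar>t\<bar>) \<ge> 1" for t using pos[of "\<bar>t\<bar>"] by simp
  have tb: "\<bar>t\<bar> ^ d / exp (\<phi> \<bar>t\<bar>) \<le> max 1 (\<bar>R\<bar> ^ d)" for t
  proof (cases "\<bar>t\<bar> \<ge> R")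
    case True
    have "\<bar>t\<bar> ^ d / exp (\<phi> \<bar>\<bar>t\<bar>\<bar>) < 1" using R[of "\<bar>t\<bar>"] True by simp
    hence "\<bar>t\<bar> ^ d / exp (\<phi> \<bar>t\<bar>) < 1" by (simp only: abs_abs)
    thus ?thesis by (meson max.cobounded1 less_imp_le order_trans)
  next
    case False
    hence "\<bar>t\<bar> ^ d \<le> \<bar>R\<bar> ^ d" by (intro power_mono) auto
    moreover have "\<bar>t\<bar> ^ d / exp (\<phi> \<bar>t\<bar>) \<le> \<bar>t\<bar> ^ d" using W1[of t]
      by (simp add: divide_le_eq mult_le_cancel_left1 mult_le_cancel_left2 mult.commute)
    ultimately show ?thesis by linarith
  qed
  show ?thesis
  proof (rule bdd_aboveI2)
    fix t :: real
    have i1: "cmod (1 / (complex_of_real t - \<i>)) \<le> 1"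
    proof -
      have "1 \<le> cmod (complex_of_real t - \<i>)" by (simp add: cmod_def)
      thus ?thesis by (simp add: norm_divide divide_le_eq_1)
    qed
    have q1: "cmod (poly Q (complex_of_real t)) \<le> S * (1 + \<bar>t\<bar> ^ d)"
    proof -
      have "cmod (poly Q (complex_of_real t)) \<le> (\<Sum>k\<le>d. cmod (coeff Q k * complex_of_real t ^ k))"
        unfolding poly_altdef d_def by (rule norm_sum)
      also have "\<dots> \<le> (\<Sum>k\<le>d. cmod (coeff Q k) * (1 + \<bar>t\<bar> ^ d))"
      proof (rule sum_mono)
        fix k assume k: "k \<in> {..d}"
        have "\<bar>t\<bar> ^ k \<le> 1 + \<bar>t\<bar> ^ d"
        proof (cases "\<bar>t\<bar> \<le> 1")
          case True
          hence "\<bar>t\<bar> ^ k \<le> 1" by (intro power_le_one) auto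
          thus ?thesis by (smt (verit) zero_le_power abs_ge_zero)
        next
          case False
          hence "\<bar>t\<bar> ^ k \<le> \<bar>t\<bar> ^ d" using k by (intro power_increasing) auto
          thus ?thesis by linarith
        qed
        thus "cmod (coeff Q k * complex_of_real t ^ k) \<le> cmod (coeff Q k) * (1 + \<bar>t\<bar> ^ d)"
          by (simp add: norm_mult norm_power mult_left_mono)
      qed
      also have "\<dots> = S * (1 + \<bar>t\<bar> ^ d)" unfolding S_def by (simp add: sum_distrib_right)
      finally show ?thesis .
    qed
    have "cmod (1 / (complex_of_real t - \<i>) - poly Q (complex_of_real t)) \<le> 1 + S * (1 + \<bar>t\<bar> ^ d)"
      using norm_triangle_ineq4[of "1 / (complex_of_real t - \<i>)" "poly Q (complex_of_real t)"] i1 q1 by linarith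
    hence "cmod (1 / (complex_of_real t - \<i>) - poly Q (complex_of_real t)) / exp (\<phi> \<bar>t\<bar>)
        \<le> (1 + S * (1 + \<bar>t\<bar> ^ d)) / exp (\<phi> \<bar>t\<bar>)" by (intro divide_right_mono) auto
    also have "\<dots> = (1 + S) / exp (\<phi> \<bar>t\<bar>) + S * (\<bar>t\<bar> ^ d / exp (\<phi> \<bar>t\<bar>))"
      by (simp add: field_simps)
    also have "\<dots> \<le> (1 + S) + S * max 1 (\<bar>R\<bar> ^ d)"
    proof -
      have "(1 + S) / exp (\<phi> \<bar>t\<bar>) \<le> 1 + S" using W1[of t] S0
        by (simp add: divide_le_eq)
      moreover have "S * (\<bar>t\<bar> ^ d / exp (\<phi> \<bar>t\<bar>)) \<le> S * max 1 (\<bar>R\<bar> ^ d)"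
        using tb[of t] S0 by (intro mult_left_mono) auto
      ultimately show ?thesis by linarith
    qed
    finally show "cmod (1 / (complex_of_real t - \<i>) - poly Q (complex_of_real t)) / exp (\<phi> \<bar>t\<bar>)
        \<le> (1 + S) + S * max 1 (\<bar>R\<bar> ^ d)" .
  qed
qed

theorem lemma5:
  fixes \<phi> :: "real \<Rightarrow> real"
  assumes cont: "continuous_on {0..} \<phi>"
    and mono: "strict_mono_on {0..} \<phi>"
    and pos: "\<And>x. x \<ge> 0 \<Longrightarrow> \<phi> x > 0"
    and growth: "\<And>k::nat. ((\<lambda>t. t ^ k / exp (\<phi> \<bar>t\<bar>)) \<longlongrightarrow> 0) at_infinity"
    and nonquasi: "\<not> ((\<lambda>t. ln (exp (\<phi> \<bar>t\<bar>)) / (1 + t\<^sup>2)) integrable_on UNIV)"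
  shows "\<exists>C>0. \<forall>\<^sub>F n in sequentially.
           ln (E_approx (\<lambda>x. exp (\<phi> \<bar>x\<bar>)) n)
             \<ge> - C * (integral {0..(THE a. a \<ge> 0 \<and> \<phi> a = real n)} (\<lambda>x. \<phi> x / (x\<^sup>2 + 1))
                      + real n / (THE a. a \<ge> 0 \<and> \<phi> a = real n))"
proof -
  have phimono: "\<phi> x \<le> \<phi> y" if "0 \<le> x" "x \<le> y" for x y
  proof (cases "x = y")
    case False
    hence "x < y" using that by simp
    thus ?thesis using strict_mono_onD[OF mono, of x y] that by auto
  qed simp
  have unb: "\<exists>b\<ge>0. \<phi> b \<ge> y" for y
  proof (rule ccontr)
    assume "\<not> (\<exists>b\<ge>0. \<phi> b \<ge> y)"
    hence lt: "\<And>b. b \<ge> 0 \<Longrightarrow> \<phi> b < y" by force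
    have "\<forall>\<^sub>F t in at_infinity. (\<lambda>t. t ^ 1 / exp (\<phi> \<bar>t\<bar>)) t < 1 / exp y"
      by (rule order_tendstoD(2)[OF growth[of 1]]) simp
    then obtain R where R: "\<And>t::real. norm t \<ge> R \<Longrightarrow> t ^ 1 / exp (\<phi> \<bar>t\<bar>) < 1 / exp y"
      unfolding eventually_at_infinity by blast
    define t where "t = max R 1"
    have t1: "t \<ge> 1" "norm t \<ge> R" unfolding t_def by auto
    have lt1: "t / exp (\<phi> t) < 1 / exp y" using R[OF t1(2)] t1 by simp
    have "exp (\<phi> t) < exp y" using lt[of t] t1 by simp
    hence "1 / exp y \<le> 1 / exp (\<phi> t)" by (intro divide_left_mono) auto
    also have "\<dots> \<le> t / exp (\<phi> t)" using t1 by (intro divide_right_mono) auto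
    finally have "1 / exp y \<le> t / exp (\<phi> t)" .
    thus False using lt1 by linarith
  qed
  define C where "C = 22 + 2 / \<phi> 0"
  have p0: "\<phi> 0 > 0" using pos by simp
  have C0: "C > 0" unfolding C_def using p0 by (simp add: add_pos_nonneg)
  define N0 where "N0 = nat \<lceil>\<phi> 1\<rceil> + 1"
  have ev: "\<forall>\<^sub>F n in sequentially. n \<ge> N0" by (rule eventually_ge_at_top)
  have main: "ln (E_approx (\<lambda>x. exp (\<phi> \<bar>x\<bar>)) n)
             \<ge> - C * (integral {0..(THE a. a \<ge> 0 \<and> \<phi> a = real n)} (\<lambda>x. \<phi> x / (x\<^sup>2 + 1))
                      + real n / (THE a. a \<ge> 0 \<and> \<phi> a = real n))" if nN: "n \<ge> N0" for n
  proof -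
    have n1: "real n > \<phi> 1" using nN unfolding N0_def by linarith
    have n0: "\<phi> 0 \<le> real n" using phimono[of 0 1] n1 by simp
    obtain b where b: "b \<ge> 0" "\<phi> b \<ge> real n" using unb by blast
    have "\<exists>a. 0 \<le> a \<and> a \<le> b \<and> \<phi> a = real n"
    proof -
      have "continuous_on {0..b} \<phi>" by (rule continuous_on_subset[OF cont]) auto
      thus ?thesis using IVT'[of \<phi> 0 "real n" b] n0 b by auto
    qed
    then obtain A0 where A0: "A0 \<ge> 0" "\<phi> A0 = real n" by blast
    have uniq: "a = A0" if "a \<ge> 0" "\<phi> a = real n" for a
    proof (rule ccontr)
      assume "a \<noteq> A0"
      hence "a < A0 \<or> A0 < a" by linarith
      thus False
      proof
        assume "a < A0"
        hence "\<phi> a < \<phi> A0" using strict_mono_onD[OF mono, of a A0] that A0 by simp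
        thus False using that A0 by simp
      next
        assume "A0 < a"
        hence "\<phi> A0 < \<phi> a" using strict_mono_onD[OF mono, of A0 a] that A0 by simp
        thus False using that A0 by simp
      qed
    qed
    define A where "A = (THE a. a \<ge> 0 \<and> \<phi> a = real n)"
    have Aeq: "A = A0" unfolding A_def
    proof (rule the_equality)
      show "A0 \<ge> 0 \<and> \<phi> A0 = real n" using A0 by simp
      show "\<And>a. a \<ge> 0 \<and> \<phi> a = real n \<Longrightarrow> a = A0" using uniq by blast
    qed
    have phiA: "\<phi> A = real n" using Aeq A0 by simp
    have A1: "A \<ge> 1"
    proof (rule ccontr)
      assume "\<not> A \<ge> 1"
      hence "\<phi> A \<le> \<phi> 1" using phimono[of A 1] Aeq A0 by simp
      thus False using phiA n1 by simp
    qed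
    have npos: "n \<ge> 1" using n1 pos[of 1] by simp
    define I where "I = integral {0..A} (\<lambda>x. \<phi> x / (x\<^sup>2 + 1))"
    define Sg where "Sg = (\<Sum>m\<le>nat \<lfloor>A\<rfloor> + 1. 8 * \<phi> (min (real m) A) / ((real m)\<^sup>2 + 4))"
    have SgI: "Sg \<le> 16 * I + 16 * real n / A"
      unfolding Sg_def I_def by (rule phi_sum_bound[OF cont phimono pos A1 phiA]) auto
    have I0: "\<phi> 0 / 2 \<le> I"
    proof -
      have "(\<Sum>m<1. \<phi> (real m) / ((real m + 1)\<^sup>2 + 1)) \<le> integral {0..real 1} (\<lambda>x. \<phi> x / (x\<^sup>2 + 1))"
        by (rule sum_int_bound[OF cont phimono pos]) auto
      also have "\<dots> \<le> I" unfolding I_def using int_mono_A[OF cont pos, of 1 A] A1 by simp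
      finally show ?thesis by simp
    qed
    define L where "L = exp (- C * (I + real n / A))"
    have Lpos: "L > 0" unfolding L_def by simp
    have Lbound: "L \<le> (A / (1 + A)) ^ (6 * n) * exp (- Sg) / 2"
    proof -
      have r1: "exp (- (6 * real n / A)) \<le> (A / (1 + A)) ^ (6 * n)"
      proof -
        have "(1 + 1 / A) ^ (6 * n) \<le> exp (1 / A) ^ (6 * n)"
          using A1 by (intro power_mono) (auto simp: exp_ge_add_one_self add.commute)
        also have "\<dots> = exp (6 * real n / A)" by (simp flip: exp_of_nat_mult)
        finally have h: "(1 + 1 / A) ^ (6 * n) \<le> exp (6 * real n / A)" .
        have "A / (1 + A) = 1 / (1 + 1 / A)" using A1 by (simp add: field_simps)
        hence "(A / (1 + A)) ^ (6 * n) = 1 / (1 + 1 / A) ^ (6 * n)" by (simp add: power_divide)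
        moreover have "(1 + 1 / A) ^ (6 * n) > 0" using A1 by (intro zero_less_power add_pos_nonneg) auto
        ultimately show ?thesis using h by (simp add: exp_minus field_simps)
      qed
      have r2: "exp (- 1) \<le> 1 / (2::real)"
      proof -
        have "2 \<le> exp (1::real)" using exp_ge_add_one_self[of 1] by simp
        thus ?thesis by (simp add: exp_minus field_simps)
      qed
      have "- C * (I + real n / A) \<le> - (6 * real n / A) + (- Sg) + (- 1)"
      proof -
        have "1 \<le> 2 / \<phi> 0 * I" using I0 p0 by (simp add: field_simps)
        moreover have "0 \<le> I" using I0 p0 by linarith
        moreover have "0 \<le> real n / A" using A1 by simp
        moreover have "0 \<le> 2 / \<phi> 0 * (real n / A)" using A1 p0 by simp
        moreover have "C * (I + real n / A) = 22 * I + 22 * (real n / A) + 2 / \<phi> 0 * I + 2 / \<phi> 0 * (real n / A)"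
          unfolding C_def by (simp add: algebra_simps add_divide_distrib)
        moreover have "16 * real n / A = 16 * (real n / A)" "6 * real n / A = 6 * (real n / A)" by simp_all
        ultimately show ?thesis using SgI by linarith
      qed
      hence "L \<le> exp (- (6 * real n / A) + (- Sg) + (- 1))" unfolding L_def by simp
      also have "\<dots> = exp (- (6 * real n / A)) * exp (- Sg) * exp (- 1)" by (simp only: exp_add)
      also have "\<dots> \<le> (A / (1 + A)) ^ (6 * n) * exp (- Sg) * (1 / 2)"
      proof -
        have q0: "0 \<le> (A / (1 + A)) ^ (6 * n)" using A1 by simp
        hence "0 \<le> (A / (1 + A)) ^ (6 * n) * exp (- Sg)" by simp
        thus ?thesis using r1 r2 q0 by (intro mult_mono) auto
      qed
      finally show ?thesis by simp
    qed
    have wb: "L \<le> wnorm (\<lambda>x. exp (\<phi> \<bar>x\<bar>)) (\<lambda>x. 1 / (complex_of_real x - \<i>) - poly Q (complex_of_real x))"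
      if Q: "degree Q \<le> n - 1" for Q
    proof -
      define w where "w = wnorm (\<lambda>x. exp (\<phi> \<bar>x\<bar>)) (\<lambda>x. 1 / (complex_of_real x - \<i>) - poly Q (complex_of_real x))"
      have pt: "cmod (1 / (complex_of_real t - \<i>) - poly Q (complex_of_real t)) / exp (\<phi> \<bar>t\<bar>) \<le> w" for t
        unfolding w_def wnorm_def by (rule cSUP_upper[OF _ wnorm_bdd[OF pos growth]]) simp
      define P where "P = [:-\<i>, 1:] * Q - 1"
      have degP: "degree P \<le> n"
      proof -
        have "degree ([:-\<i>, 1:] * Q) \<le> n"
          using degree_mult_le[of "[:-\<i>, 1:]" Q] Q npos by simp
        thus ?thesis unfolding P_def using degree_diff_le[of "[:-\<i>, 1:] * Q" n 1] by simp
      qed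
      have Pi: "poly P \<i> = -1" unfolding P_def by simp
      have Pbd: "cmod (poly P (of_real t)) \<le> cmod (of_real t - \<i>) * w * exp (\<phi> \<bar>t\<bar>)" if "\<bar>t\<bar> \<le> A" for t
      proof -
        have ne: "complex_of_real t - \<i> \<noteq> 0" by (simp add: complex_eq_iff)
        have "poly P (of_real t) = - ((of_real t - \<i>) * (1 / (complex_of_real t - \<i>) - poly Q (complex_of_real t)))"
          unfolding P_def using ne by (simp add: algebra_simps)
        hence "cmod (poly P (of_real t)) = cmod (of_real t - \<i>) * cmod (1 / (complex_of_real t - \<i>) - poly Q (complex_of_real t))"
          by (simp add: norm_mult)
        also have "\<dots> \<le> cmod (of_real t - \<i>) * (w * exp (\<phi> \<bar>t\<bar>))"
          using pt[of t] by (intro mult_left_mono) (auto simp: divide_le_eq)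
        finally show ?thesis by (simp add: mult.assoc)
      qed
      have "(A / (1 + A)) ^ (6 * n) * exp (- Sg) / 2 \<le> w"
        unfolding Sg_def by (rule core[OF degP Pi A1 phimono pos phiA Pbd]) auto
      thus ?thesis using Lbound unfolding w_def by linarith
    qed
    have "L \<le> E_approx (\<lambda>x. exp (\<phi> \<bar>x\<bar>)) n"
      unfolding E_approx_def
    proof (rule cINF_greatest)
      show "{Q :: complex poly. degree Q \<le> n - 1} \<noteq> {}" by (auto intro: exI[of _ 0])
    qed (use wb in auto)
    hence "ln L \<le> ln (E_approx (\<lambda>x. exp (\<phi> \<bar>x\<bar>)) n)" using Lpos by simp
    thus ?thesis unfolding L_def I_def A_def by simp
  qed
  have "\<forall>\<^sub>F n in sequentially. ln (E_approx (\<lambda>x. exp (\<phi> \<bar>x\<bar>)) n)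
             \<ge> - C * (integral {0..(THE a. a \<ge> 0 \<and> \<phi> a = real n)} (\<lambda>x. \<phi> x / (x\<^sup>2 + 1))
                      + real n / (THE a. a \<ge> 0 \<and> \<phi> a = real n))"
    using ev by (rule eventually_mono) (rule main)
  thus ?thesis using C0 by blast
qed

end
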